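(* Let $f : X \to \mathbb{R}$ and suppose there is a closed set $C \subseteq X$ such that $\inf_{x \in C} \mathrm{osc}_f(C,x) > 0$. Then Player I has a winning strategy in $\Gamma'(f)$.
   Context: Let $A$ be a non-empty countable set and $T$ a pruned tree on $A$ (a set of finite sequences of elements of $A$, closed under initial segments, in which every sequence has a proper extension in $T$). Let $X$ be the set of infinite branches of $T$, with the topology generated by the cylinder sets $O(s) = \{x \in X : s \text{ is an initial segment of } x\}$, $s \in T$. For closed $C \subseteq X$ and $x \in C$, $\mathrm{osc}_f(C,x) = \inf_{s \in T,\, x \in O(s)} \sup_{y,z \in O(s) \cap C} |f(y) - f(z)|$. The game $\Gamma'(f)$: Player I and Player II alternate, Player I moving first; Player I plays $x_0, x_1, \dots \in A$ subject to $(x_0,\dots,x_t) \in T$ for all $t$, and after each move $x_t$ Player II plays a pair of reals $(v_t,w_t)$; Player II wins iff $f(x_0,x_1,\dots) = \limsup_t v_t = \liminf_t w_t$; otherwise Player I wins. *)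

theory Defs
  imports "HOL-Analysis.Analysis"
begin

definition pruned_tree :: "'a set \<Rightarrow> 'a list set \<Rightarrow> bool" where
  "pruned_tree A T \<longleftrightarrow> T \<subseteq> lists A
     \<and> (\<forall>s\<in>T. \<forall>n. take n s \<in> T)
     \<and> (\<forall>s\<in>T. \<exists>t\<in>T. length t > length s \<and> take (length s) t = s)"

definition branches :: "'a list set \<Rightarrow> (nat \<Rightarrow> 'a) set" where
  "branches T = {x. \<forall>n. map x [0..<n] \<in> T}"

definition cyl :: "'a list set \<Rightarrow> 'a list \<Rightarrow> (nat \<Rightarrow> 'a) set" where
  "cyl T s = {x \<in> branches T. map x [0..<length s] = s}"

text \<open>Closed subsets of X for the topology generated by the cylinder sets
  (the cylinders form a base, so C is closed iff every point of X outside C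
  has a cylinder neighbourhood disjoint from C).\<close>
definition closed_branches :: "'a list set \<Rightarrow> (nat \<Rightarrow> 'a) set \<Rightarrow> bool" where
  "closed_branches T C \<longleftrightarrow> C \<subseteq> branches T \<and>
     (\<forall>x \<in> branches T - C. \<exists>s\<in>T. x \<in> cyl T s \<and> cyl T s \<inter> C = {})"

text \<open>Oscillation, valued in the extended reals (the sup may be infinite).\<close>
definition osc :: "'a list set \<Rightarrow> ((nat \<Rightarrow> 'a) \<Rightarrow> real) \<Rightarrow> (nat \<Rightarrow> 'a) set \<Rightarrow> (nat \<Rightarrow> 'a) \<Rightarrow> ereal" where
  "osc T f C x = (INF s \<in> {s \<in> T. x \<in> cyl T s}.
      Sup {ereal \<bar>f y - f z\<bar> | y z. y \<in> cyl T s \<inter> C \<and> z \<in> cyl T s \<inter> C})"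

text \<open>Game Gamma'(f). A strategy for Player I maps the list of Player II's
  previous moves to Player I's next move. The play produced by strategy sigma
  against II's move sequence vw: I's move at time t.\<close>
definition playI :: "((real \<times> real) list \<Rightarrow> 'a) \<Rightarrow> (nat \<Rightarrow> real \<times> real) \<Rightarrow> nat \<Rightarrow> 'a" where
  "playI \<sigma> vw t = \<sigma> (map vw [0..<t])"

definition II_wins :: "((nat \<Rightarrow> 'a) \<Rightarrow> real) \<Rightarrow> (nat \<Rightarrow> 'a) \<Rightarrow> (nat \<Rightarrow> real \<times> real) \<Rightarrow> bool" where
  "II_wins f x vw \<longleftrightarrow>
     limsup (\<lambda>t. ereal (fst (vw t))) = ereal (f x) \<and>
     liminf (\<lambda>t. ereal (snd (vw t))) = ereal (f x)"

definition I_winning_strategy :: "'a list set \<Rightarrow> ((nat \<Rightarrow> 'a) \<Rightarrow> real) \<Rightarrow> ((real \<times> real) list \<Rightarrow> 'a) \<Rightarrow> bool" where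
  "I_winning_strategy T f \<sigma> \<longleftrightarrow>
     (\<forall>vw. (\<forall>t. map (playI \<sigma> vw) [0..<Suc t] \<in> T) \<and> \<not> II_wins f (playI \<sigma> vw) vw)"

end

theory Submission
  imports Defs
begin

definition nxtu :: "(nat\<Rightarrow>'a) set \<Rightarrow> ((nat\<Rightarrow>'a)\<Rightarrow>real) \<Rightarrow> real \<Rightarrow> (nat\<Rightarrow>'a) \<Rightarrow> nat \<Rightarrow> (nat\<Rightarrow>'a)" where
  "nxtu C f d u n = (SOME u'. u' \<in> C \<and> map u' [0..<n] = map u [0..<n] \<and> d < \<bar>f u' - f u\<bar>)"

fun stt :: "(nat\<Rightarrow>'a) set \<Rightarrow> ((nat\<Rightarrow>'a)\<Rightarrow>real) \<Rightarrow> real \<Rightarrow> (nat \<Rightarrow> real \<times> real) \<Rightarrow> nat \<Rightarrow> (nat\<Rightarrow>'a) \<times> bool \<times> bool" where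
  "stt C f d vw 0 = ((SOME u. u \<in> C), False, False)"
| "stt C f d vw (Suc t) = (let s = stt C f d vw t;
      a' = (fst (snd s) \<or> f (fst s) - d/4 < fst (vw t));
      b' = (snd (snd s) \<or> snd (vw t) < f (fst s) + d/4)
    in if a' \<and> b' then (nxtu C f d (fst s) (Suc t), False, False) else (fst s, a', b'))"

lemma stt_cong: "(\<forall>i<t. vw i = vw' i) \<Longrightarrow> stt C f d vw t = stt C f d vw' t"
  by (induction t) (auto simp: Let_def)

lemma map_upt_eq: "map g [0..<n] = map h [0..<n] \<longleftrightarrow> (\<forall>i<n. g i = h i)"
  by (auto simp: map_eq_conv)

theorem mainTheorem17:
  fixes A :: "'a set" and T :: "'a list set" and f :: "(nat \<Rightarrow> 'a) \<Rightarrow> real"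
    and C :: "(nat \<Rightarrow> 'a) set"
  assumes "A \<noteq> {}" and "countable A" and "pruned_tree A T"
    and "closed_branches T C" and "C \<noteq> {}"
    and "(INF x \<in> C. osc T f C x) > 0"
  shows "\<exists>\<sigma>. I_winning_strategy T f \<sigma>"
proof -
  have CB: "C \<subseteq> branches T" using assms(4) unfolding closed_branches_def by auto
  obtain e where e0: "0 < ereal e" and em: "ereal e < (INF x \<in> C. osc T f C x)"
    using ereal_dense2[OF assms(6)] by auto
  define d where "d = e / 2"
  have d0: "d > 0" using e0 d_def by simp
  have nx: "nxtu C f d u n \<in> C \<and> map (nxtu C f d u n) [0..<n] = map u [0..<n]
      \<and> d < \<bar>f (nxtu C f d u n) - f u\<bar>" if uC: "u \<in> C" for u n
  proof -
    define s where "s = map u [0..<n]"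
    have uB: "u \<in> branches T" using uC CB by auto
    have sT: "s \<in> T" using uB unfolding branches_def s_def by auto
    have ucyl: "u \<in> cyl T s" using uB unfolding cyl_def s_def by auto
    have "ereal e < osc T f C u"
      using em INF_lower[OF uC, of "osc T f C"] by (meson less_le_trans)
    also have "osc T f C u \<le> Sup {ereal \<bar>f y - f z\<bar> | y z. y \<in> cyl T s \<inter> C \<and> z \<in> cyl T s \<inter> C}"
      unfolding osc_def by (rule INF_lower) (use sT ucyl in auto)
    finally obtain y z where yz: "y \<in> cyl T s \<inter> C" "z \<in> cyl T s \<inter> C" "e < \<bar>f y - f z\<bar>"
      by (auto simp: less_Sup_iff)
    have ly: "map y [0..<n] = map u [0..<n]" "map z [0..<n] = map u [0..<n]"
      using yz unfolding cyl_def s_def by auto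
    have "\<exists>u'. u' \<in> C \<and> map u' [0..<n] = map u [0..<n] \<and> d < \<bar>f u' - f u\<bar>"
    proof (cases "d < \<bar>f y - f u\<bar>")
      case True then show ?thesis using yz ly by auto
    next
      case False
      then have "d < \<bar>f z - f u\<bar>" using yz(3) d_def by linarith
      then show ?thesis using yz ly by auto
    qed
    then show ?thesis unfolding nxtu_def by (rule someI_ex)
  qed
  define \<sigma> where "\<sigma> = (\<lambda>l::(real\<times>real) list. fst (stt C f d (\<lambda>i. l ! i) (length l)) (length l))"
  have "I_winning_strategy T f \<sigma>"
    unfolding I_winning_strategy_def
  proof
    fix vw :: "nat \<Rightarrow> real \<times> real"
    define U where "U t = fst (stt C f d vw t)" for t
    define P where "P t = fst (snd (stt C f d vw t))" for t
    define Q where "Q t = snd (snd (stt C f d vw t))" for t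
    define v where "v t = fst (vw t)" for t
    define w where "w t = snd (vw t)" for t
    define sw where "sw t = ((P t \<or> f (U t) - d/4 < v t) \<and> (Q t \<or> w t < f (U t) + d/4))" for t
    have swT: "U (Suc t) = nxtu C f d (U t) (Suc t) \<and> \<not> P (Suc t) \<and> \<not> Q (Suc t)" if "sw t" for t
      using that unfolding sw_def U_def P_def Q_def v_def w_def by (simp add: Let_def)
    have swF: "U (Suc t) = U t \<and> P (Suc t) = (P t \<or> f (U t) - d/4 < v t)
        \<and> Q (Suc t) = (Q t \<or> w t < f (U t) + d/4)" if "\<not> sw t" for t
      using that unfolding sw_def U_def P_def Q_def v_def w_def by (simp add: Let_def)
    have UC: "U t \<in> C" for t
    proof (induction t)
      case 0 then show ?case unfolding U_def using assms(5) by (simp add: some_in_eq)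
    next
      case (Suc t) then show ?case using swT swF nx by (cases "sw t") auto
    qed
    have Upre: "\<forall>i<Suc t. U (Suc t) i = U t i" for t
    proof (cases "sw t")
      case True
      have "map (nxtu C f d (U t) (Suc t)) [0..<Suc t] = map (U t) [0..<Suc t]"
        using nx[OF UC[of t], of "Suc t"] by blast
      then have "\<forall>i<Suc t. nxtu C f d (U t) (Suc t) i = U t i" by (rule map_upt_eq[THEN iffD1])
      then show ?thesis using swT[OF True] by simp
    next
      case False then show ?thesis using swF by simp
    qed
    have Ustab: "U t' i = U t i" if "i \<le> t" "t \<le> t'" for i t t'
      using that(2)
    proof (induction t' rule: dec_induct)
      case base then show ?case by simp
    next
      case (step m) then show ?case using Upre[of m] that(1) by auto
    qed
    have play: "playI \<sigma> vw t = U t t" for t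
    proof -
      have "stt C f d (\<lambda>i. map vw [0..<t] ! i) t = stt C f d vw t"
        by (rule stt_cong) simp
      then show ?thesis unfolding playI_def \<sigma>_def U_def by simp
    qed
    have legal: "\<forall>t. map (playI \<sigma> vw) [0..<Suc t] \<in> T"
    proof
      fix t
      have "map (playI \<sigma> vw) [0..<Suc t] = map (U t) [0..<Suc t]"
        unfolding map_upt_eq play using Ustab by (metis less_Suc_eq_le order_refl)
      moreover have "U t \<in> branches T" using UC CB by auto
      ultimately show "map (playI \<sigma> vw) [0..<Suc t] \<in> T" unfolding branches_def by (metis (no_types, lifting) mem_Collect_eq)
    qed
    have notwin: "\<not> II_wins f (playI \<sigma> vw) vw"
    proof (cases "\<exists>N. \<forall>t\<ge>N. \<not> sw t")
      case True
      then obtain N where N: "\<And>t. t \<ge> N \<Longrightarrow> \<not> sw t" by blast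
      define u where "u = U N"
      have Uu: "U t = u" if "t \<ge> N" for t
        using that
      proof (induction t rule: dec_induct)
        case base then show ?case by (simp add: u_def)
      next
        case (step m) then show ?case using swF[OF N[of m]] by simp
      qed
      have xu: "playI \<sigma> vw = u"
      proof
        fix i
        show "playI \<sigma> vw i = u i"
        proof (cases "i \<ge> N")
          case True then show ?thesis using play Uu by simp
        next
          case False then show ?thesis using play Ustab[of i i N] u_def by simp
        qed
      qed
      have Pmono: "P t \<Longrightarrow> P t'" if "N \<le> t" "t \<le> t'" for t t'
        using that(2)
      proof (induction t' rule: dec_induct)
        case base then show ?case .
      next
        case (step m) then show ?case using swF[OF N[of m]] that(1) by simp
      qed
      have Qmono: "Q t \<Longrightarrow> Q t'" if "N \<le> t" "t \<le> t'" for t t'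
        using that(2)
      proof (induction t' rule: dec_induct)
        case base then show ?case .
      next
        case (step m) then show ?case using swF[OF N[of m]] that(1) by simp
      qed
      have alt: "(\<forall>t\<ge>N. v t \<le> f u - d/4) \<or> (\<forall>t\<ge>N. f u + d/4 \<le> w t)"
      proof (rule ccontr)
        assume "\<not> ?thesis"
        then obtain t1 t2 where t1: "t1 \<ge> N" "f u - d/4 < v t1" and t2: "t2 \<ge> N" "w t2 < f u + d/4"
          by (auto simp: not_le)
        define m where "m = max t1 t2"
        have "P m \<or> f (U m) - d/4 < v m"
        proof (cases "m = t1")
          case True then show ?thesis using t1 Uu[of m] by simp
        next
          case False
          then have "Suc t1 \<le> m" unfolding m_def by auto
          moreover have "P (Suc t1)" using swF[OF N[OF t1(1)]] t1 Uu[OF t1(1)] by simp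
          ultimately show ?thesis using Pmono[of "Suc t1" m] t1(1) by simp
        qed
        moreover have "Q m \<or> w m < f (U m) + d/4"
        proof (cases "m = t2")
          case True then show ?thesis using t2 Uu[of m] by simp
        next
          case False
          then have "Suc t2 \<le> m" unfolding m_def by auto
          moreover have "Q (Suc t2)" using swF[OF N[OF t2(1)]] t2 Uu[OF t2(1)] by simp
          ultimately show ?thesis using Qmono[of "Suc t2" m] t2(1) by simp
        qed
        ultimately have "sw m" unfolding sw_def by blast
        moreover have "m \<ge> N" using t1 unfolding m_def by simp
        ultimately show False using N by blast
      qed
      show ?thesis
      proof
        assume W: "II_wins f (playI \<sigma> vw) vw"
        from alt show False
        proof
          assume a: "\<forall>t\<ge>N. v t \<le> f u - d/4"
          have "limsup (\<lambda>t. ereal (fst (vw t))) \<le> ereal (f u - d/4)"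
            by (rule Limsup_bounded) (use a in \<open>auto simp: v_def eventually_sequentially\<close>)
          then show False using W d0 xu unfolding II_wins_def by simp
        next
          assume a: "\<forall>t\<ge>N. f u + d/4 \<le> w t"
          have "ereal (f u + d/4) \<le> liminf (\<lambda>t. ereal (snd (vw t)))"
            by (rule Liminf_bounded) (use a in \<open>auto simp: w_def eventually_sequentially\<close>)
          then show False using W d0 xu unfolding II_wins_def by simp
        qed
      qed
    next
      case False
      then have inf: "\<forall>N. \<exists>t\<ge>N. sw t" by auto
      have nextsw: "\<exists>t'. s \<le> t' \<and> sw t' \<and> (\<forall>t. s \<le> t \<and> t < t' \<longrightarrow> \<not> sw t)" for s
      proof -
        define t' where "t' = (LEAST t. s \<le> t \<and> sw t)"
        have ex: "\<exists>t. s \<le> t \<and> sw t" using inf by blast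
        have "s \<le> t' \<and> sw t'" unfolding t'_def by (rule LeastI_ex[OF ex])
        moreover have "\<forall>t. s \<le> t \<and> t < t' \<longrightarrow> \<not> sw t"
          unfolding t'_def using not_less_Least by blast
        ultimately show ?thesis by blast
      qed
      have phase_inv: "U t = U s \<and> (P t \<longrightarrow> (\<exists>i. s \<le> i \<and> i < t \<and> f (U s) - d/4 < v i))
          \<and> (Q t \<longrightarrow> (\<exists>i. s \<le> i \<and> i < t \<and> w i < f (U s) + d/4))"
        if "\<not> P s" "\<not> Q s" "s \<le> t" "\<forall>j. s \<le> j \<and> j < t \<longrightarrow> \<not> sw j" for s t
        using that(3,4)
      proof (induction t rule: dec_induct)
        case base then show ?case using that(1,2) by simp
      next
        case (step m)
        have nm: "\<not> sw m" using step.prems step.hyps by auto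
        have IH: "U m = U s \<and> (P m \<longrightarrow> (\<exists>i. s \<le> i \<and> i < m \<and> f (U s) - d/4 < v i))
          \<and> (Q m \<longrightarrow> (\<exists>i. s \<le> i \<and> i < m \<and> w i < f (U s) + d/4))"
          using step.IH step.prems by auto
        show ?case using swF[OF nm] IH step.hyps less_Suc_eq by auto
      qed
      have phase: "(\<exists>i\<ge>s. f (U s) - d/4 < v i) \<and> (\<exists>i\<ge>s. w i < f (U s) + d/4) \<and> U t' = U s"
        if "\<not> P s" "\<not> Q s" "s \<le> t'" "\<forall>j. s \<le> j \<and> j < t' \<longrightarrow> \<not> sw j" "sw t'" for s t'
      proof -
        have I: "U t' = U s \<and> (P t' \<longrightarrow> (\<exists>i. s \<le> i \<and> i < t' \<and> f (U s) - d/4 < v i))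
          \<and> (Q t' \<longrightarrow> (\<exists>i. s \<le> i \<and> i < t' \<and> w i < f (U s) + d/4))"
          using phase_inv[OF that(1-4)] .
        show ?thesis using I that(3,5) unfolding sw_def by (metis order_less_imp_le)
      qed
      show ?thesis
      proof
        assume W: "II_wins f (playI \<sigma> vw) vw"
        define a where "a = f (playI \<sigma> vw)"
        have ev1: "eventually (\<lambda>t. ereal (fst (vw t)) < ereal (a + d/8)) sequentially"
          by (rule Limsup_lessD) (use W d0 in \<open>simp add: II_wins_def a_def\<close>)
        have ev2: "eventually (\<lambda>t. ereal (a - d/8) < ereal (snd (vw t))) sequentially"
          by (rule less_LiminfD) (use W d0 in \<open>simp add: II_wins_def a_def\<close>)
        obtain N where N: "\<And>t. t \<ge> N \<Longrightarrow> v t < a + d/8 \<and> a - d/8 < w t"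
          using eventually_conj[OF ev1 ev2] unfolding eventually_sequentially v_def w_def by auto
        have close: "\<bar>f (U (Suc t1)) - a\<bar> < 3*d/8 \<and> U t2 = U (Suc t1)"
          if "t1 \<ge> N" "sw t1" "Suc t1 \<le> t2" "\<forall>j. Suc t1 \<le> j \<and> j < t2 \<longrightarrow> \<not> sw j" "sw t2" for t1 t2
        proof -
          have r: "\<not> P (Suc t1)" "\<not> Q (Suc t1)" using swT[OF that(2)] by auto
          from phase[OF r that(3,4,5)] obtain i j where
            i: "i \<ge> Suc t1" "f (U (Suc t1)) - d/4 < v i" and
            j: "j \<ge> Suc t1" "w j < f (U (Suc t1)) + d/4" and eq: "U t2 = U (Suc t1)" by blast
          have "v i < a + d/8" "a - d/8 < w j" using N i(1) j(1) that(1) by auto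
          then have "\<bar>f (U (Suc t1)) - a\<bar> < 3*d/8" using i(2) j(2) unfolding abs_less_iff by linarith
          then show ?thesis using eq by simp
        qed
        obtain t1 where t1: "t1 \<ge> N" "sw t1" using inf by blast
        obtain t2 where t2: "Suc t1 \<le> t2" "sw t2" "\<forall>j. Suc t1 \<le> j \<and> j < t2 \<longrightarrow> \<not> sw j"
          using nextsw[of "Suc t1"] by blast
        obtain t3 where t3: "Suc t2 \<le> t3" "sw t3" "\<forall>j. Suc t2 \<le> j \<and> j < t3 \<longrightarrow> \<not> sw j"
          using nextsw[of "Suc t2"] by blast
        have c1: "\<bar>f (U (Suc t1)) - a\<bar> < 3*d/8" "U t2 = U (Suc t1)"
          using close[OF t1 t2(1) t2(3) t2(2)] by auto
        have c2: "\<bar>f (U (Suc t2)) - a\<bar> < 3*d/8"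
          using close[of t2 t3] t1 t2 t3 by auto
        have "d < \<bar>f (U (Suc t2)) - f (U t2)\<bar>"
          using swT[OF t2(2)] nx[OF UC[of t2], of "Suc t2"] by simp
        then have "d < \<bar>f (U (Suc t2)) - f (U (Suc t1))\<bar>" using c1(2) by simp
        then show False using c1(1) c2 d0 unfolding abs_less_iff by linarith
      qed
    qed
    show "(\<forall>t. map (playI \<sigma> vw) [0..<Suc t] \<in> T) \<and> \<not> II_wins f (playI \<sigma> vw) vw"
      using legal notwin by blast
  qed
  then show ?thesis by blast
qed

end
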